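(* Let $G$ be a finite directed graph with vertex set $V$, edge set $E$ and signed incidence matrix $M$, and let $H\subseteq E$. Suppose that for every $e\in H$ there exists $z_e\in\mathbb Z_{\ge0}^E$ supported in $H$ with $e+z_e\in\operatorname{Row}(M)\cap\mathbb Z^E$. Then there is an ordered partition $V=V_1\sqcup\dots\sqcup V_s$ with respect to which $H$ is a cut subgraph and the orientation of $H$ induced from $G$ is coherent acyclic.
   Context: The signed incidence matrix has rows indexed by vertices and columns by edges, with entry $-1$ if $e$ points away from $v$, $+1$ if $e$ points towards $v$, and $0$ if $e$ is a loop or not incident to $v$; $\mathbb R^E$ has standard basis $\{e\}_{e\in E}$. A subset $H\subseteq E$ is a cut subgraph with respect to an ordered partition $V=V_1\sqcup\dots\sqcup V_s$ if the edges of $H$ are exactly the edges of $G$ whose endpoints lie in different parts. The orientation of $H$ is coherent acyclic (with respect to the partition) if every edge $(u,v)\in H$ has $u\in V_i$, $v\in V_j$ with $i<j$. *)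

theory Defs
  imports Complex_Main
begin

definition digraph :: "'v set \<Rightarrow> 'e set \<Rightarrow> ('e \<Rightarrow> 'v) \<Rightarrow> ('e \<Rightarrow> 'v) \<Rightarrow> bool" where
  "digraph V E tail head \<longleftrightarrow> finite V \<and> finite E \<and> (\<forall>e\<in>E. tail e \<in> V \<and> head e \<in> V)"

definition incidence :: "('e \<Rightarrow> 'v) \<Rightarrow> ('e \<Rightarrow> 'v) \<Rightarrow> 'v \<Rightarrow> 'e \<Rightarrow> real" where
  "incidence tail head v e =
     (if tail e = head e then 0 else if v = tail e then -1 else if v = head e then 1 else 0)"

definition in_row_space :: "'v set \<Rightarrow> 'e set \<Rightarrow> ('e \<Rightarrow> 'v) \<Rightarrow> ('e \<Rightarrow> 'v) \<Rightarrow> ('e \<Rightarrow> real) \<Rightarrow> bool" where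
  "in_row_space V E tail head x \<longleftrightarrow>
     (\<exists>c :: 'v \<Rightarrow> real. \<forall>f\<in>E. x f = (\<Sum>v\<in>V. c v * incidence tail head v f))"

definition integral_vec :: "'e set \<Rightarrow> ('e \<Rightarrow> real) \<Rightarrow> bool" where
  "integral_vec E x \<longleftrightarrow> (\<forall>f\<in>E. x f \<in> \<int>)"

definition basis_vec :: "'e \<Rightarrow> 'e \<Rightarrow> real" where
  "basis_vec e = (\<lambda>f. if f = e then 1 else 0)"

definition ordered_partition :: "'v set \<Rightarrow> 'v set list \<Rightarrow> bool" where
  "ordered_partition V Ps \<longleftrightarrow>
     (\<forall>i<length Ps. Ps ! i \<noteq> {}) \<and>
     (\<forall>i<length Ps. \<forall>j<length Ps. i \<noteq> j \<longrightarrow> Ps ! i \<inter> Ps ! j = {}) \<and>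
     \<Union>(set Ps) = V"

definition cut_subgraph :: "'e set \<Rightarrow> ('e \<Rightarrow> 'v) \<Rightarrow> ('e \<Rightarrow> 'v) \<Rightarrow> 'v set list \<Rightarrow> 'e set \<Rightarrow> bool" where
  "cut_subgraph E tail head Ps H \<longleftrightarrow>
     (\<forall>e\<in>E. e \<in> H \<longleftrightarrow>
        (\<exists>i<length Ps. \<exists>j<length Ps. i \<noteq> j \<and> tail e \<in> Ps ! i \<and> head e \<in> Ps ! j))"

definition coherent_acyclic :: "('e \<Rightarrow> 'v) \<Rightarrow> ('e \<Rightarrow> 'v) \<Rightarrow> 'v set list \<Rightarrow> 'e set \<Rightarrow> bool" where
  "coherent_acyclic tail head Ps H \<longleftrightarrow>
     (\<forall>e\<in>H. \<exists>i<length Ps. \<exists>j<length Ps. i < j \<and> tail e \<in> Ps ! i \<and> head e \<in> Ps ! j)"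

end

theory Submission
  imports Defs
begin

lemma inc_sum:
  assumes "finite V" "tail f \<in> V" "head f \<in> V" "tail f \<noteq> head f"
  shows "(\<Sum>v\<in>V. c v * incidence tail head v f) = c (head f) - c (tail f)"
proof -
  have "(\<Sum>v\<in>V. c v * incidence tail head v f)
      = (\<Sum>v\<in>V. (if v = head f then c v else 0) - (if v = tail f then c v else 0))"
    by (rule sum.cong) (auto simp: incidence_def assms)
  also have "\<dots> = c (head f) - c (tail f)"
    by (simp add: sum_subtractf assms)
  finally show ?thesis .
qed

lemma inc_sum_loop:
  assumes "tail f = head f"
  shows "(\<Sum>v\<in>V. c v * incidence tail head v f) = 0"
  using assms by (simp add: incidence_def)

theorem mainTheorem20:
  fixes V :: "'v set" and E :: "'e set" and tail head :: "'e \<Rightarrow> 'v" and H :: "'e set"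
  assumes "digraph V E tail head"
    and "H \<subseteq> E"
    and "\<forall>e\<in>H. \<exists>z :: 'e \<Rightarrow> real.
            (\<forall>f\<in>E. z f \<in> \<int> \<and> z f \<ge> 0 \<and> (z f \<noteq> 0 \<longrightarrow> f \<in> H)) \<and>
            in_row_space V E tail head (\<lambda>f. basis_vec e f + z f) \<and>
            integral_vec E (\<lambda>f. basis_vec e f + z f)"
  shows "\<exists>Ps. ordered_partition V Ps \<and> cut_subgraph E tail head Ps H \<and> coherent_acyclic tail head Ps H"
proof -
  have fV: "finite V" and fE: "finite E" and inV: "\<And>e. e \<in> E \<Longrightarrow> tail e \<in> V \<and> head e \<in> V"
    using assms(1) by (auto simp: digraph_def)
  have fH: "finite H" using fE assms(2) finite_subset by blast
  have "\<forall>e\<in>H. \<exists>zc. (\<forall>f\<in>E. fst zc f \<ge> 0 \<and> (fst zc f \<noteq> 0 \<longrightarrow> f \<in> H)) \<and>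
       (\<forall>f\<in>E. basis_vec e f + fst zc f = (\<Sum>v\<in>V. snd zc v * incidence tail head v f))"
  proof
    fix e assume "e \<in> H"
    then obtain z where z: "\<forall>f\<in>E. z f \<in> \<int> \<and> z f \<ge> 0 \<and> (z f \<noteq> 0 \<longrightarrow> f \<in> H)"
      and r: "in_row_space V E tail head (\<lambda>f. basis_vec e f + z f)" using assms(3) by blast
    from r obtain c where "\<forall>f\<in>E. basis_vec e f + z f = (\<Sum>v\<in>V. c v * incidence tail head v f)"
      by (auto simp: in_row_space_def)
    then show "\<exists>zc. (\<forall>f\<in>E. fst zc f \<ge> 0 \<and> (fst zc f \<noteq> 0 \<longrightarrow> f \<in> H)) \<and>
       (\<forall>f\<in>E. basis_vec e f + fst zc f = (\<Sum>v\<in>V. snd zc v * incidence tail head v f))"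
      using z by (intro exI[of _ "(z, c)"]) auto
  qed
  then obtain zc where zc: "\<And>e. e \<in> H \<Longrightarrow> (\<forall>f\<in>E. fst (zc e) f \<ge> 0 \<and> (fst (zc e) f \<noteq> 0 \<longrightarrow> f \<in> H)) \<and>
       (\<forall>f\<in>E. basis_vec e f + fst (zc e) f = (\<Sum>v\<in>V. snd (zc e) v * incidence tail head v f))"
    by metis
  define z where "z e = fst (zc e)" for e
  define cc where "cc e = snd (zc e)" for e
  have z0: "\<And>e f. e \<in> H \<Longrightarrow> f \<in> E \<Longrightarrow> z e f \<ge> 0" using zc by (auto simp: z_def)
  have zH: "\<And>e f. e \<in> H \<Longrightarrow> f \<in> E \<Longrightarrow> f \<notin> H \<Longrightarrow> z e f = 0" using zc by (auto simp: z_def)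
  have row: "\<And>e f. e \<in> H \<Longrightarrow> f \<in> E \<Longrightarrow> basis_vec e f + z e f = (\<Sum>v\<in>V. cc e v * incidence tail head v f)"
    using zc by (auto simp: z_def cc_def)
  define p where "p v = (\<Sum>e\<in>H. cc e v)" for v
  have noloop: "\<And>f. f \<in> H \<Longrightarrow> tail f \<noteq> head f"
  proof
    fix f assume f: "f \<in> H" "tail f = head f"
    have "f \<in> E" using f assms(2) by auto
    have "basis_vec f f + z f f = 0" using row[OF f(1) \<open>f\<in>E\<close>] inc_sum_loop[where V=V and c="cc f" and tail=tail and head=head and f=f, OF f(2)] by simp
    moreover have "z f f \<ge> 0" using z0 f \<open>f\<in>E\<close> by auto
    ultimately show False by (simp add: basis_vec_def)
  qed
  have diff: "\<And>e f. e \<in> H \<Longrightarrow> f \<in> E \<Longrightarrow> tail f \<noteq> head f \<Longrightarrow>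
      cc e (head f) - cc e (tail f) = basis_vec e f + z e f"
  proof -
    fix e f assume a: "e \<in> H" "f \<in> E" "tail f \<noteq> head f"
    have "(\<Sum>v\<in>V. cc e v * incidence tail head v f) = cc e (head f) - cc e (tail f)"
      using inc_sum[where V=V and c="cc e" and tail=tail and head=head and f=f, OF fV _ _ a(3)] inV[OF a(2)] by blast
    then show "cc e (head f) - cc e (tail f) = basis_vec e f + z e f" using row[OF a(1,2)] by simp
  qed
  have pdiff: "\<And>f. f \<in> E \<Longrightarrow> tail f \<noteq> head f \<Longrightarrow>
      p (head f) - p (tail f) = (\<Sum>e\<in>H. basis_vec e f + z e f)"
  proof -
    fix f assume a: "f \<in> E" "tail f \<noteq> head f"
    have "p (head f) - p (tail f) = (\<Sum>e\<in>H. cc e (head f) - cc e (tail f))"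
      by (simp add: p_def sum_subtractf)
    also have "\<dots> = (\<Sum>e\<in>H. basis_vec e f + z e f)"
      by (rule sum.cong) (use diff a in auto)
    finally show "p (head f) - p (tail f) = (\<Sum>e\<in>H. basis_vec e f + z e f)" .
  qed
  have pH: "\<And>f. f \<in> H \<Longrightarrow> p (tail f) < p (head f)"
  proof -
    fix f assume f: "f \<in> H"
    have fE': "f \<in> E" using f assms(2) by auto
    have "basis_vec f f + z f f \<le> (\<Sum>e\<in>H. basis_vec e f + z e f)"
      by (rule member_le_sum) (use f fH z0 fE' in \<open>auto simp: basis_vec_def\<close>)
    moreover have "basis_vec f f + z f f \<ge> 1" using z0[OF f fE'] by (simp add: basis_vec_def)
    ultimately show "p (tail f) < p (head f)" using pdiff[OF fE' noloop[OF f]] by linarith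
  qed
  have pnH: "\<And>f. f \<in> E \<Longrightarrow> f \<notin> H \<Longrightarrow> p (tail f) = p (head f)"
  proof -
    fix f assume f: "f \<in> E" "f \<notin> H"
    show "p (tail f) = p (head f)"
    proof (cases "tail f = head f")
      case False
      have "(\<Sum>e\<in>H. basis_vec e f + z e f) = 0"
        by (rule sum.neutral) (use f zH in \<open>auto simp: basis_vec_def\<close>)
      then show ?thesis using pdiff[OF f(1) False] by simp
    qed simp
  qed
  have keyH: "\<And>f. f \<in> E \<Longrightarrow> f \<in> H \<longleftrightarrow> p (tail f) \<noteq> p (head f)"
    using pH pnH by force
  define L where "L = sorted_list_of_set (p ` V)"
  have setL: "set L = p ` V" using fV by (simp add: L_def)
  have dL: "distinct L" and sL: "sorted L" by (simp_all add: L_def)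
  define Ps where "Ps = map (\<lambda>r. {v\<in>V. p v = r}) L"
  have mem: "\<And>i v. i < length Ps \<Longrightarrow> v \<in> Ps ! i \<longleftrightarrow> v \<in> V \<and> p v = L ! i"
    by (auto simp: Ps_def)
  have idx: "\<And>v. v \<in> V \<Longrightarrow> \<exists>i<length Ps. v \<in> Ps ! i"
  proof -
    fix v assume v: "v \<in> V"
    then have "p v \<in> set L" using setL by auto
    then obtain i where "i < length L" "L ! i = p v" by (auto simp: in_set_conv_nth)
    then show "\<exists>i<length Ps. v \<in> Ps ! i" using v by (auto simp: Ps_def)
  qed
  have op: "ordered_partition V Ps"
    unfolding ordered_partition_def
  proof (intro conjI allI impI)
    fix i assume i: "i < length Ps"
    then have "L ! i \<in> p ` V" using setL by (auto simp: Ps_def)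
    then show "Ps ! i \<noteq> {}" using i mem by auto
  next
    fix i j assume "i < length Ps" "j < length Ps" "i \<noteq> j"
    then have "L ! i \<noteq> L ! j" using dL by (simp add: Ps_def nth_eq_iff_index_eq)
    then show "Ps ! i \<inter> Ps ! j = {}" using mem \<open>i < length Ps\<close> \<open>j < length Ps\<close> by auto
  next
    show "\<Union> (set Ps) = V"
    proof
      show "\<Union> (set Ps) \<subseteq> V" by (auto simp: Ps_def)
      show "V \<subseteq> \<Union> (set Ps)" using idx by (auto simp: in_set_conv_nth) (metis nth_mem)
    qed
  qed
  have lt: "\<And>i j. i < length Ps \<Longrightarrow> j < length Ps \<Longrightarrow> L ! i < L ! j \<Longrightarrow> i < j"
  proof (rule ccontr)
    fix i j assume *: "i < length Ps" "j < length Ps" "L ! i < L ! j" "\<not> i < j"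
    then have "L ! j \<le> L ! i" using sL by (intro sorted_nth_mono) (auto simp: Ps_def)
    then show False using * by simp
  qed
  have cs: "cut_subgraph E tail head Ps H"
    unfolding cut_subgraph_def
  proof (intro ballI)
    fix e assume e: "e \<in> E"
    obtain i where i: "i < length Ps" "tail e \<in> Ps ! i" using idx inV e by blast
    obtain j where j: "j < length Ps" "head e \<in> Ps ! j" using idx inV e by blast
    have ti: "p (tail e) = L ! i" and hj: "p (head e) = L ! j" using mem i j by auto
    show "e \<in> H \<longleftrightarrow> (\<exists>i<length Ps. \<exists>j<length Ps. i \<noteq> j \<and> tail e \<in> Ps ! i \<and> head e \<in> Ps ! j)"
    proof
      assume "e \<in> H"
      then have "L ! i \<noteq> L ! j" using keyH e ti hj by auto
      then have "i \<noteq> j" by auto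
      then show "\<exists>i<length Ps. \<exists>j<length Ps. i \<noteq> j \<and> tail e \<in> Ps ! i \<and> head e \<in> Ps ! j"
        using i j by blast
    next
      assume "\<exists>i<length Ps. \<exists>j<length Ps. i \<noteq> j \<and> tail e \<in> Ps ! i \<and> head e \<in> Ps ! j"
      then obtain i' j' where "i' < length Ps" "j' < length Ps" "i' \<noteq> j'"
        "tail e \<in> Ps ! i'" "head e \<in> Ps ! j'" by blast
      then have "L ! i' \<noteq> L ! j'" using dL by (simp add: Ps_def nth_eq_iff_index_eq)
      then have "p (tail e) \<noteq> p (head e)" using mem \<open>i' < length Ps\<close> \<open>j' < length Ps\<close>
        \<open>tail e \<in> Ps ! i'\<close> \<open>head e \<in> Ps ! j'\<close> by auto
      then show "e \<in> H" using keyH e by auto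
    qed
  qed
  have ca: "coherent_acyclic tail head Ps H"
    unfolding coherent_acyclic_def
  proof
    fix e assume eH: "e \<in> H"
    then have e: "e \<in> E" using assms(2) by auto
    obtain i where i: "i < length Ps" "tail e \<in> Ps ! i" using idx inV e by blast
    obtain j where j: "j < length Ps" "head e \<in> Ps ! j" using idx inV e by blast
    have ti: "p (tail e) = L ! i" and hj: "p (head e) = L ! j" using mem i j by auto
    have "i < j" using lt i(1) j(1) pH[OF eH] ti hj by auto
    then show "\<exists>i<length Ps. \<exists>j<length Ps. i < j \<and> tail e \<in> Ps ! i \<and> head e \<in> Ps ! j"
      using i j by blast
  qed
  show ?thesis using op cs ca by blast
qed

end
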